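(* Let $P\ge 1$ be an integer, let $\Delta x,\Delta t>0$, and let $U^*:\mathbb{R}\to\mathbb{R}^d$ be a continuous stationary solution of the balance law $U_t+F(U)_x=S(U)H_x$, i.e. $F(U^* )_x=S(U^* )H_x$. Assume that for every node $x_i$ the solution of the Cauchy problem $F(V)_x=S(V)H_x$, $V(x_i)=U^*(x_i)$, is unique on the nodes used by the scheme, so that the local equilibrium used by the scheme at node $i$ is $U^*_i=U^*$. If the WBCAT$2P$ scheme described in the context is applied with initial data $U^0_i=U^*(x_i)$ for all $i\in\mathbb{Z}$, then $U^n_i=U^0_i$ for all $i\in\mathbb{Z}$ and all $n\ge 0$.
   Context: Setting: $U:\mathbb{R}\times[0,\infty)\to\mathbb{R}^d$, $F,S:\mathbb{R}^d\to\mathbb{R}^d$ smooth, $H:\mathbb{R}\to\mathbb{R}$ smooth and known, $H_x=H'$. Uniform grid $x_l=l\Delta x$, $l\in\mathbb{Z}$; $U^n_l$ approximates $U(x_l,n\Delta t)$. Numerical differentiation weights: for integers $k\ge 0$ and real $q$, $\gamma^{k,q}_{P,j}$ ($j=-P+1,\dots,P$) are the unique weights such that $\frac{1}{h^k}\sum_{j=-P+1}^{P}\gamma^{k,q}_{P,j} f(x_0+jh)$ equals the $k$-th derivative at $x_0+qh$ of the polynomial of degree $\le 2P-1$ interpolating $f$ at $x_0+jh$, $j=-P+1,\dots,P$ (so $k=0$ is Lagrange interpolation). Quadrature weights: for each $m$ and $j=-P+2,\dots,P$, $a^{m,j}_{P,l}$ ($l=-P+1,\dots,P$) are weights of the interpolatory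 rule $\int_{x_{m+j-1}}^{x_{m+j}} f\,dx\approx \Delta x\sum_{l=-P+1}^P a^{m,j}_{P,l} f(x_{m+l})$ with nodes $x_{m+l}$. WBCAT$2P$ scheme. Given $U^n$, for each $i$ let $U^*_i$ be the stationary solution with $U^*_i(x_i)=U^n_i$. For each $m\in\{i-1,i\}$ compute, with indices $j,s,l,r\in\{-P+1,\dots,P\}$: (0) $F^{(0)}_{j}=F(U^n_{m+j})-F(U^*_i(x_{m+j}))$; for $j=-P+2,\dots,P$, $\tilde I^{(0)}_{j-1,j}=\Delta x\sum_l a^{m,j}_{P,l}\big(S(U^n_{m+l})-S(U^*_i(x_{m+l}))\big)H_x(x_{m+l})$; and $\tilde I^{(0)}_{-P+1,j}=\sum_{s=-P+2}^{j}\tilde I^{(0)}_{s-1,s}$ (which is $0$ for $j=-P+1$). (1) For $k=1,\dots,2P-1$: $U^{(k)}_j=-\frac{1}{\Delta x}\sum_s\gamma^{1,j}_{P,s}F^{(k-1)}_s+\frac{1}{\Delta x}\sum_s\gamma^{1,j}_{P,s}\tilde I^{(k-1)}_{-P+1,s}$; $U^{k,r}_j=U^n_{m+j}+\sum_{q=1}^{k}\frac{(r\Delta t)^q}{q!}U^{(q)}_j$; $F^{(k)}_j=\frac{1}{\Delta t^k}\sum_r\gamma^{k,0}_{P,r}F(U^{k,r}_j)$; for $j=-P+2,\dots,P$, $\tilde I^{(k)}_{j-1,j}=\frac{1}{\Delta t^k}\sum_r\gamma^{k,0}_{P,r}\,\Delta x\sum_l a^{m,j}_{P,l}S(U^{k,r}_l)H_x(x_{m+l})$;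 and $\tilde I^{(k)}_{-P+1,j}=\sum_{s=-P+2}^{j}\tilde I^{(k)}_{s-1,s}$. (2) Flux: $F_{i;m+1/2}=\sum_{k=1}^{2P}\frac{\Delta t^{k-1}}{k!}\sum_j\gamma^{0,1/2}_{P,j}F^{(k-1)}_j$ (quantities computed with this $m$). (3) Source: for $k=1,\dots,2P$ let $\tilde{\mathcal I}^{(k-1)}_j$ be $\tilde I^{(k-1)}_{j,j+1}$ computed with $m=i-1$ if $j\le 0$, and $\tilde I^{(k-1)}_{j-1,j}$ computed with $m=i$ if $j\ge1$; set $\tilde S_i=\sum_{k=1}^{2P}\frac{\Delta t^{k-1}}{k!}\sum_j\gamma^{0,1/2}_{P,j}\tilde{\mathcal I}^{(k-1)}_j$. (4) Update: $U^{n+1}_i=U^n_i+\frac{\Delta t}{\Delta x}\big(F_{i;i-1/2}-F_{i;i+1/2}+\tilde S_i\big)$. *)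

theory Defs
  imports "HOL-Analysis.Analysis" "HOL-Computational_Algebra.Polynomial"
begin

definition stencil :: "nat \<Rightarrow> int set" where
  "stencil P = {- int P + 1 .. int P}"

definition node :: "real \<Rightarrow> int \<Rightarrow> real" where
  "node dx l = real_of_int l * dx"

text \<open>Lagrange basis polynomial (in the normalised variable s = (x - x0)/h) for the
  nodes -P+1,...,P, attached to node j.  The interpolant of f is
  sum_j f(x0+jh) L_j((x-x0)/h).\<close>
definition lagrange_basis :: "nat \<Rightarrow> int \<Rightarrow> real poly" where
  "lagrange_basis P j =
     (\<Prod>m\<in>stencil P - {j}. [: - of_int m / of_int (j - m), 1 / of_int (j - m) :])"

text \<open>gamma^{k,q}_{P,j}: the k-th derivative at x0+qh of the interpolant equals
  h^{-k} sum_j gamma_j f(x0+jh).\<close>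
definition gamma :: "nat \<Rightarrow> nat \<Rightarrow> real \<Rightarrow> int \<Rightarrow> real" where
  "gamma P k q j = poly ((pderiv ^^ k) (lagrange_basis P j)) q"

text \<open>a^{m,j}_{P,l}: weights of the interpolatory rule on [x_{m+j-1}, x_{m+j}] with
  nodes x_{m+l}; they do not depend on m.\<close>
definition qweight :: "nat \<Rightarrow> int \<Rightarrow> int \<Rightarrow> real" where
  "qweight P j l = integral {real_of_int j - 1 .. real_of_int j} (\<lambda>s. poly (lagrange_basis P l) s)"

definition is_stationary ::
  "(real^'d \<Rightarrow> real^'d) \<Rightarrow> (real^'d \<Rightarrow> real^'d) \<Rightarrow> (real \<Rightarrow> real) \<Rightarrow> (real \<Rightarrow> real^'d) \<Rightarrow> bool" where
  "is_stationary F S H V \<longleftrightarrow> continuous_on UNIV V \<and>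
     (\<forall>y. ((\<lambda>z. F (V z)) has_vector_derivative (deriv H y *\<^sub>R S (V y))) (at y))"

definition local_eq ::
  "(real^'d \<Rightarrow> real^'d) \<Rightarrow> (real^'d \<Rightarrow> real^'d) \<Rightarrow> (real \<Rightarrow> real) \<Rightarrow> real \<Rightarrow> real^'d \<Rightarrow> (real \<Rightarrow> real^'d)" where
  "local_eq F S H xi v = (SOME V. is_stationary F S H V \<and> V xi = v)"

text \<open>A level of the recursion: (F^{(k)}_j, I~^{(k)}_{j-1,j}) as functions of j.\<close>
type_synonym 'd level = "(int \<Rightarrow> real^'d) \<times> (int \<Rightarrow> real^'d)"

text \<open>I~^{(k)}_{-P+1,j} from the pieces I~^{(k)}_{s-1,s}.\<close>
definition cumI :: "nat \<Rightarrow> (int \<Rightarrow> real^'d) \<Rightarrow> int \<Rightarrow> real^'d" where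
  "cumI P I j = (\<Sum>s\<in>{- int P + 2 .. j}. I s)"

text \<open>U^{(q)}_j, computed from level q-1.\<close>
definition Uder :: "nat \<Rightarrow> real \<Rightarrow> 'd level \<Rightarrow> int \<Rightarrow> real^'d" where
  "Uder P dx L j =
     - ((1 / dx) *\<^sub>R (\<Sum>s\<in>stencil P. gamma P 1 (of_int j) s *\<^sub>R fst L s))
     + (1 / dx) *\<^sub>R (\<Sum>s\<in>stencil P. gamma P 1 (of_int j) s *\<^sub>R cumI P (snd L) s)"

definition level0 ::
  "(real^'d \<Rightarrow> real^'d) \<Rightarrow> (real^'d \<Rightarrow> real^'d) \<Rightarrow> (real \<Rightarrow> real) \<Rightarrow> nat \<Rightarrow> real \<Rightarrow>
   (int \<Rightarrow> real^'d) \<Rightarrow> (real \<Rightarrow> real^'d) \<Rightarrow> int \<Rightarrow> 'd level" where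
  "level0 F S H P dx Uc W m =
     ((\<lambda>j. F (Uc (m + j)) - F (W (node dx (m + j)))),
      (\<lambda>j. dx *\<^sub>R (\<Sum>l\<in>stencil P. (qweight P j l * deriv H (node dx (m + l))) *\<^sub>R
                     (S (Uc (m + l)) - S (W (node dx (m + l)))))))"

text \<open>Given the list L = [level 0, ..., level (k-1)], compute level k (k = length L \<ge> 1).\<close>
definition level_next ::
  "(real^'d \<Rightarrow> real^'d) \<Rightarrow> (real^'d \<Rightarrow> real^'d) \<Rightarrow> (real \<Rightarrow> real) \<Rightarrow> nat \<Rightarrow> real \<Rightarrow> real \<Rightarrow>
   (int \<Rightarrow> real^'d) \<Rightarrow> int \<Rightarrow> 'd level list \<Rightarrow> 'd level" where
  "level_next F S H P dx dt Uc m L =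
     (let k = length L;
          Ukr = (\<lambda>r j. Uc (m + j) +
                   (\<Sum>q\<in>{1..k}. (((of_int r * dt) ^ q) / fact q) *\<^sub>R Uder P dx (L ! (q - 1)) j))
      in ((\<lambda>j. (1 / dt ^ k) *\<^sub>R (\<Sum>r\<in>stencil P. gamma P k 0 r *\<^sub>R F (Ukr r j))),
          (\<lambda>j. (1 / dt ^ k) *\<^sub>R (\<Sum>r\<in>stencil P. gamma P k 0 r *\<^sub>R
                 (dx *\<^sub>R (\<Sum>l\<in>stencil P. (qweight P j l * deriv H (node dx (m + l))) *\<^sub>R
                                         S (Ukr r l)))))))"

primrec levels ::
  "(real^'d \<Rightarrow> real^'d) \<Rightarrow> (real^'d \<Rightarrow> real^'d) \<Rightarrow> (real \<Rightarrow> real) \<Rightarrow> nat \<Rightarrow> real \<Rightarrow> real \<Rightarrow>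
   (int \<Rightarrow> real^'d) \<Rightarrow> (real \<Rightarrow> real^'d) \<Rightarrow> int \<Rightarrow> nat \<Rightarrow> 'd level list" where
  "levels F S H P dx dt Uc W m 0 = [level0 F S H P dx Uc W m]"
| "levels F S H P dx dt Uc W m (Suc k) =
     (let L = levels F S H P dx dt Uc W m k in L @ [level_next F S H P dx dt Uc m L])"

definition level ::
  "(real^'d \<Rightarrow> real^'d) \<Rightarrow> (real^'d \<Rightarrow> real^'d) \<Rightarrow> (real \<Rightarrow> real) \<Rightarrow> nat \<Rightarrow> real \<Rightarrow> real \<Rightarrow>
   (int \<Rightarrow> real^'d) \<Rightarrow> (real \<Rightarrow> real^'d) \<Rightarrow> int \<Rightarrow> nat \<Rightarrow> 'd level" where
  "level F S H P dx dt Uc W m k = levels F S H P dx dt Uc W m k ! k"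

text \<open>Numerical flux F_{i;m+1/2}, with W = U*_i.\<close>
definition num_flux ::
  "(real^'d \<Rightarrow> real^'d) \<Rightarrow> (real^'d \<Rightarrow> real^'d) \<Rightarrow> (real \<Rightarrow> real) \<Rightarrow> nat \<Rightarrow> real \<Rightarrow> real \<Rightarrow>
   (int \<Rightarrow> real^'d) \<Rightarrow> (real \<Rightarrow> real^'d) \<Rightarrow> int \<Rightarrow> real^'d" where
  "num_flux F S H P dx dt Uc W m =
     (\<Sum>k\<in>{1..2*P}. (dt ^ (k - 1) / fact k) *\<^sub>R
        (\<Sum>j\<in>stencil P. gamma P 0 (1/2) j *\<^sub>R fst (level F S H P dx dt Uc W m (k - 1)) j))"

definition num_source ::
  "(real^'d \<Rightarrow> real^'d) \<Rightarrow> (real^'d \<Rightarrow> real^'d) \<Rightarrow> (real \<Rightarrow> real) \<Rightarrow> nat \<Rightarrow> real \<Rightarrow> real \<Rightarrow>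
   (int \<Rightarrow> real^'d) \<Rightarrow> (real \<Rightarrow> real^'d) \<Rightarrow> int \<Rightarrow> real^'d" where
  "num_source F S H P dx dt Uc W i =
     (\<Sum>k\<in>{1..2*P}. (dt ^ (k - 1) / fact k) *\<^sub>R
        (\<Sum>j\<in>stencil P. gamma P 0 (1/2) j *\<^sub>R
           (if j \<le> 0 then snd (level F S H P dx dt Uc W (i - 1) (k - 1)) (j + 1)
            else snd (level F S H P dx dt Uc W i (k - 1)) j)))"

definition wbcat_step ::
  "(real^'d \<Rightarrow> real^'d) \<Rightarrow> (real^'d \<Rightarrow> real^'d) \<Rightarrow> (real \<Rightarrow> real) \<Rightarrow> nat \<Rightarrow> real \<Rightarrow> real \<Rightarrow>
   (int \<Rightarrow> real^'d) \<Rightarrow> int \<Rightarrow> real^'d" where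
  "wbcat_step F S H P dx dt Uc i =
     (let W = local_eq F S H (node dx i) (Uc i)
      in Uc i + (dt / dx) *\<^sub>R
           (num_flux F S H P dx dt Uc W (i - 1) - num_flux F S H P dx dt Uc W i
            + num_source F S H P dx dt Uc W i))"

end

theory Submission
  imports Defs
begin
lemma stencil_fin[simp]: "finite (stencil P)" by (simp add: stencil_def)

lemma poly_lb: "poly (lagrange_basis P j) x = (\<Prod>m\<in>stencil P - {j}. (x - of_int m) / of_int (j - m))"
  unfolding lagrange_basis_def poly_prod
proof (intro prod.cong refl)
  fix m show "poly [:- of_int m / of_int (j - m), 1 / of_int (j - m):] x = (x - of_int m) / of_int (j - m)"
    by (simp add: diff_divide_distrib)
qed

lemma poly_lb_node:
  assumes "j \<in> stencil P" "t \<in> stencil P"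
  shows "poly (lagrange_basis P j) (of_int t) = (if t = j then 1 else 0)"
proof (cases "t = j")
  case True thus ?thesis by (simp add: poly_lb)
next
  case False
  hence "t \<in> stencil P - {j}" using assms by auto
  hence "(\<Prod>m\<in>stencil P - {j}. (of_int t - of_int m) / of_int (j - m) :: real) = 0"
    by (intro prod_zero) auto
  thus ?thesis using False by (simp add: poly_lb)
qed

lemma deg_lb: "degree (lagrange_basis P j) \<le> 2*P - 1" if "j \<in> stencil P"
proof -
  have "degree (lagrange_basis P j) \<le> sum (\<lambda>_. 1) (stencil P - {j})"
    unfolding lagrange_basis_def
    by (rule order.trans[OF degree_prod_sum_le]) (auto intro!: sum_mono)
  also have "\<dots> \<le> card (stencil P) - 1" using that by (simp add: card_Diff_singleton_if)
  also have "card (stencil P) = 2*P" by (simp add: stencil_def)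
  finally show ?thesis .
qed

lemma sum_lb: assumes "P \<ge> 1" shows "(\<Sum>j\<in>stencil P. lagrange_basis P j) = 1"
proof (rule poly_eqI_degree[where A = "of_int ` stencil P"])
  fix x assume "x \<in> (of_int ` stencil P :: real set)"
  then obtain t where t: "t \<in> stencil P" "x = of_int t" by auto
  have "poly (\<Sum>j\<in>stencil P. lagrange_basis P j) x = (\<Sum>j\<in>stencil P. if t = j then 1 else 0)"
    unfolding poly_sum t(2) using t(1) by (intro sum.cong) (auto simp: poly_lb_node)
  also have "\<dots> = 1" using t(1) by simp
  finally show "poly (\<Sum>j\<in>stencil P. lagrange_basis P j) x = poly 1 x" by simp
next
  have c: "card (of_int ` stencil P :: real set) = 2*P"
    by (subst card_image) (auto simp: inj_on_def stencil_def)
  have "degree (\<Sum>j\<in>stencil P. lagrange_basis P j) \<le> 2*P - 1"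
    by (rule degree_sum_le) (use deg_lb in auto)
  thus "degree (\<Sum>j\<in>stencil P. lagrange_basis P j) < card (of_int ` stencil P :: real set)"
    using c assms by linarith
  show "degree (1::real poly) < card (of_int ` stencil P :: real set)" using c assms by simp
qed

lemma sum_gamma: assumes "P \<ge> 1" "k \<ge> 1" shows "(\<Sum>r\<in>stencil P. gamma P k q r) = 0"
proof -
  have "(\<Sum>r\<in>stencil P. gamma P k q r) = poly ((pderiv ^^ k) (\<Sum>j\<in>stencil P. lagrange_basis P j)) q"
    by (simp add: gamma_def higher_pderiv_sum poly_sum)
  also have "\<dots> = 0" using assms(2) by (simp add: sum_lb[OF assms(1)], cases k, auto simp: funpow_Suc_right simp del: funpow.simps)
  finally show ?thesis .
qed
definition Zl :: "nat \<Rightarrow> ('d::finite) level \<Rightarrow> bool" where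
  "Zl P L \<longleftrightarrow> (\<forall>j\<in>stencil P. fst L j = 0 \<and> snd L j = 0)"

lemma cumI_zero: "Zl P L \<Longrightarrow> s \<in> stencil P \<Longrightarrow> cumI P (snd L) s = 0"
  unfolding cumI_def Zl_def by (intro sum.neutral) (auto simp: stencil_def)

lemma Uder_zero: "Zl P L \<Longrightarrow> Uder P dx L j = 0"
  unfolding Uder_def by (simp add: cumI_zero Zl_def)

lemma next_zero:
  assumes "P \<ge> 1" "L \<noteq> []" "\<forall>x\<in>set L. Zl P x"
  shows "Zl P (level_next F S H P dx dt Uc m L)"
proof -
  have U: "Uder P dx (L ! (q - 1)) j = 0" if "q \<in> {1..length L}" for q j
    using that assms(3) by (intro Uder_zero) auto
  have k: "length L \<ge> 1" using assms(2) by (cases L) auto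
  have g: "(\<Sum>r\<in>stencil P. gamma P (length L) 0 r *\<^sub>R v) = 0" for v :: "real^'d"
    by (simp add: scaleR_sum_left[symmetric] sum_gamma[OF assms(1) k])
  have U0: "(\<Sum>q\<in>{1..length L}. c q *\<^sub>R Uder P dx (L ! (q - 1)) j) = 0" for c j
    by (intro sum.neutral ballI) (simp only: U scaleR_zero_right)
  have g2: "(\<Sum>r\<in>stencil P. gamma P (length L) 0 r *\<^sub>R (dx *\<^sub>R v)) = 0" for v :: "real^'d"
    by (rule g)
  show ?thesis unfolding Zl_def level_next_def Let_def
    by (simp only: U0 add_0_right g g2 scaleR_zero_right) simp
qed

lemma levels_zero:
  assumes "P \<ge> 1" "Zl P (level0 F S H P dx Uc W m)"
  shows "length (levels F S H P dx dt Uc W m k) = Suc k \<and> (\<forall>x\<in>set (levels F S H P dx dt Uc W m k). Zl P x)"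
proof (induction k)
  case 0 thus ?case using assms by simp
next
  case (Suc k)
  hence ne: "levels F S H P dx dt Uc W m k \<noteq> []" by auto
  thus ?case using Suc next_zero[OF assms(1) ne] by (auto simp: Let_def)
qed

lemma level_zero:
  assumes "P \<ge> 1" "Zl P (level0 F S H P dx Uc W m)"
  shows "Zl P (level F S H P dx dt Uc W m k)"
  using levels_zero[OF assms, of dt k] unfolding level_def by (metis lessI nth_mem)

lemma level0_zero:
  assumes "\<forall>j\<in>stencil P. W (node dx (m + j)) = Uc (m + j)"
  shows "Zl P (level0 F S H P dx Uc W m)"
  using assms unfolding Zl_def level0_def by simp

lemma step_fix:
  assumes "P \<ge> 1"
    and "\<forall>j\<in>stencil P. W (node dx (i - 1 + j)) = Uc (i - 1 + j)"
    and "\<forall>j\<in>stencil P. W (node dx (i + j)) = Uc (i + j)"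
    and "W = local_eq F S H (node dx i) (Uc i)"
  shows "wbcat_step F S H P dx dt Uc i = Uc i"
proof -
  have Z1: "Zl P (level F S H P dx dt Uc W (i - 1) k)" for k
    by (intro level_zero[OF assms(1)] level0_zero assms(2))
  have Z2: "Zl P (level F S H P dx dt Uc W i k)" for k
    by (intro level_zero[OF assms(1)] level0_zero assms(3))
  have f1: "num_flux F S H P dx dt Uc W (i - 1) = 0"
    unfolding num_flux_def using Z1 by (simp add: Zl_def)
  have f2: "num_flux F S H P dx dt Uc W i = 0"
    unfolding num_flux_def using Z2 by (simp add: Zl_def)
  have s: "num_source F S H P dx dt Uc W i = 0"
    unfolding num_source_def
  proof (intro sum.neutral ballI)
    fix k assume "k \<in> {1..2*P}"
    have "j + 1 \<in> stencil P" if "j \<in> stencil P" "j \<le> 0" for j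
      using that assms(1) by (auto simp: stencil_def)
    thus "(dt ^ (k - 1) / fact k) *\<^sub>R
        (\<Sum>j\<in>stencil P. gamma P 0 (1/2) j *\<^sub>R
           (if j \<le> 0 then snd (level F S H P dx dt Uc W (i - 1) (k - 1)) (j + 1)
            else snd (level F S H P dx dt Uc W i (k - 1)) j)) = 0"
      using Z1 Z2 by (auto simp: Zl_def intro!: sum.neutral split: if_splits)
  qed
  show ?thesis unfolding wbcat_step_def Let_def assms(4)[symmetric] f1 f2 s by simp
qed

theorem mainTheorem1:
  fixes F S :: "real^'d \<Rightarrow> real^'d" and H :: "real \<Rightarrow> real"
    and P :: nat and dx dt :: real and Ustar :: "real \<Rightarrow> real^'d"
  assumes "P \<ge> 1" and "dx > 0" and "dt > 0"
    and "\<forall>x. H differentiable (at x)"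
    and "is_stationary F S H Ustar"
    and "\<forall>i V. is_stationary F S H V \<and> V (node dx i) = Ustar (node dx i) \<longrightarrow>
            (\<forall>l\<in>{- int P .. int P}. V (node dx (i + l)) = Ustar (node dx (i + l)))"
  shows "\<forall>n i. ((wbcat_step F S H P dx dt ^^ n) (\<lambda>i. Ustar (node dx i))) i = Ustar (node dx i)"
proof -
  define Uc where "Uc = (\<lambda>i. Ustar (node dx i))"
  have fix_: "wbcat_step F S H P dx dt Uc = Uc"
  proof
    fix i
    define W where "W = local_eq F S H (node dx i) (Uc i)"
    have "is_stationary F S H W \<and> W (node dx i) = Ustar (node dx i)"
      unfolding W_def local_eq_def Uc_def by (rule someI[of _ Ustar]) (use assms(5) in simp)
    hence Wl: "\<forall>l\<in>{- int P .. int P}. W (node dx (i + l)) = Uc (i + l)"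
      using assms(6) unfolding Uc_def by blast
    have A: "\<forall>j\<in>stencil P. W (node dx (i - 1 + j)) = Uc (i - 1 + j)"
    proof
      fix j assume "j \<in> stencil P"
      hence "j - 1 \<in> {- int P .. int P}" by (auto simp: stencil_def)
      hence "W (node dx (i + (j - 1))) = Uc (i + (j - 1))" using Wl by blast
      thus "W (node dx (i - 1 + j)) = Uc (i - 1 + j)" by (simp add: algebra_simps)
    qed
    have B: "\<forall>j\<in>stencil P. W (node dx (i + j)) = Uc (i + j)"
      using Wl by (auto simp: stencil_def)
    show "wbcat_step F S H P dx dt Uc i = Uc i"
      by (rule step_fix[OF assms(1) A B W_def])
  qed
  have "(wbcat_step F S H P dx dt ^^ n) Uc = Uc" for n
    by (induction n) (simp_all add: fix_)
  thus ?thesis unfolding Uc_def by simp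
qed

end
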